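(* Let $p\ne3$ be a prime, $a\in\mathbb{Z}_p^*$ and $b,c\in\mathbb{Z}_p$. Then $Q_{a,b}(\mathbb{Z}_p)\cong Q_{a,c}(\mathbb{Z}_p)$.
   Context: Identify $\mathbb{Z}_p$ with $\{0,\dots,p-1\}$. The overflow indicator is $(x,y)_p=1$ if $x+y\ge p$ as integers and $0$ otherwise. $Q_{a,b}(\mathbb{Z}_p)$ is $\mathbb{Z}_p^3$ with multiplication $(x_1,x_2,x_3)(y_1,y_2,y_3)=(x_1+y_1+(x_2+y_2)x_3y_3+a(x_2,y_2)_p+b(x_3,y_3)_p,\ x_2+y_2,\ x_3+y_3)$. *)

theory Defs
  imports Main "HOL-Computational_Algebra.Primes"
begin

text \<open>Z_p is identified with {0,...,p-1} (naturals). Overflow indicator (x,y)_p.\<close>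
definition ovf :: "nat \<Rightarrow> nat \<Rightarrow> nat \<Rightarrow> nat" where
  "ovf p x y = (if x + y \<ge> p then 1 else 0)"

definition Zp3 :: "nat \<Rightarrow> (nat \<times> nat \<times> nat) set" where
  "Zp3 p = {0..<p} \<times> {0..<p} \<times> {0..<p}"

fun Qmult :: "nat \<Rightarrow> nat \<Rightarrow> nat \<Rightarrow> nat \<times> nat \<times> nat \<Rightarrow> nat \<times> nat \<times> nat \<Rightarrow> nat \<times> nat \<times> nat" where
  "Qmult p a b (x1, x2, x3) (y1, y2, y3) =
     ((x1 + y1 + ((x2 + y2) mod p) * x3 * y3 + a * ovf p x2 y2 + b * ovf p x3 y3) mod p,
      (x2 + y2) mod p, (x3 + y3) mod p)"

definition magma_iso :: "'a set \<Rightarrow> ('a \<Rightarrow> 'a \<Rightarrow> 'a) \<Rightarrow> 'b set \<Rightarrow> ('b \<Rightarrow> 'b \<Rightarrow> 'b) \<Rightarrow> bool" where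
  "magma_iso A m B n \<longleftrightarrow> (\<exists>f. bij_betw f A B \<and> (\<forall>x\<in>A. \<forall>y\<in>A. f (m x y) = n (f x) (f y)))"

end

theory Submission
  imports Defs "HOL-Number_Theory.Number_Theory"
begin

lemma alg:
  fixes x1 y1 x2 y2 x3 y3 p a b c n k t j U uz uw o2 o3 s2 s3 r ov :: int
  assumes "s3 = x3+y3-p*o3" "r = s2+n*s3-p*U" "ov = o2+n*o3+U-uz-uw" "c = b+p*j-a*n" "3*k = 1+p*t"
  shows "p dvd ((x1+y1+s2*x3*y3+a*o2+b*o3+a*U+(n*k)*s3^3)
     - (x1+a*uz+(n*k)*x3^3+(y1+a*uw+(n*k)*y3^3)+r*x3*y3+a*ov+c*o3))"
proof -
  let ?T = "x3+y3"
  have "(x1+y1+s2*x3*y3+a*o2+b*o3+a*U+(n*k)*s3^3)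
     - (x1+a*uz+(n*k)*x3^3+(y1+a*uw+(n*k)*y3^3)+r*x3*y3+a*ov+c*o3)
     = p * (- j*o3 + U*x3*y3 - n*k*o3*(s3^2+s3*?T+?T^2) + n*x3*y3*(t*?T + o3))
       + n*x3*y3*?T*(3*k - 1 - p*t)"
    unfolding assms(1,2,3,4) by (simp add: algebra_simps power2_eq_square power3_eq_cube)
  also have "3*k - 1 - p*t = 0" using assms(5) by simp
  finally show ?thesis by simp
qed

lemma modl1: "((u::nat) mod p + v + w) mod p = (u + v + w) mod p"
  by (metis add.assoc mod_add_left_eq)

lemma modl2: "((u::nat) mod p + v mod p + w) mod p = (u + v + w) mod p"
  by (metis mod_add_left_eq mod_add_right_eq mod_add_eq)

lemma ovf_div: "x < p \<Longrightarrow> y < p \<Longrightarrow> ovf p x y = (x + y) div p"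
  unfolding ovf_def by (auto simp: div_if not_le)

definition fmap :: "nat \<Rightarrow> nat \<Rightarrow> nat \<Rightarrow> nat \<Rightarrow> nat \<times> nat \<times> nat \<Rightarrow> nat \<times> nat \<times> nat" where
  "fmap p a n m = (\<lambda>(x1,x2,x3). ((x1 + a*((x2+n*x3) div p) + m*x3^3) mod p, (x2+n*x3) mod p, x3))"

lemma nat_mod_from_int:
  fixes A B p :: nat
  assumes "int p dvd (int A - int B)"
  shows "A mod p = B mod p"
proof -
  have "int A mod int p = int B mod int p" using assms by (simp add: mod_eq_dvd_iff)
  thus ?thesis by (metis of_nat_eq_iff of_nat_mod)
qed

lemma hom:
  fixes p a b c n k m x1 x2 x3 y1 y2 y3 :: nat and j t :: int
  assumes p: "p > 0" and xs: "x2 < p" "x3 < p" "y2 < p" "y3 < p"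
    and cj: "int c = int b + int p * j - int a * int n"
    and kt: "3 * int k = 1 + int p * t" and m: "m = n * k"
  shows "fmap p a n m (Qmult p a b (x1,x2,x3) (y1,y2,y3))
       = Qmult p a c (fmap p a n m (x1,x2,x3)) (fmap p a n m (y1,y2,y3))"
proof -
  define s2 where "s2 = (x2+y2) mod p"
  define s3 where "s3 = (x3+y3) mod p"
  define o2 where "o2 = (x2+y2) div p"
  define o3 where "o3 = (x3+y3) div p"
  define x2p where "x2p = (x2+n*x3) mod p"
  define y2p where "y2p = (y2+n*y3) mod p"
  define uz where "uz = (x2+n*x3) div p"
  define uw where "uw = (y2+n*y3) div p"
  define U where "U = (s2+n*s3) div p"
  define ov where "ov = (x2p+y2p) div p"
  define r where "r = (x2p+y2p) mod p"
  have x2pp: "x2p < p" "y2p < p" using p by (auto simp: x2p_def y2p_def)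
  have r2: "r = (s2+n*s3) mod p"
  proof -
    have "r = (x2+n*x3+(y2+n*y3)) mod p" unfolding r_def x2p_def y2p_def by (simp add: mod_add_eq)
    moreover have "(s2+n*s3) mod p = (x2+y2+n*(x3+y3)) mod p"
      by (rule mod_add_cong) (simp_all add: s2_def s3_def mod_mult_right_eq)
    moreover have "x2+n*x3+(y2+n*y3) = x2+y2+n*(x3+y3)" by (simp add: algebra_simps)
    ultimately show ?thesis by simp
  qed
  have e1: "int x2 + int y2 = int p * int o2 + int s2"
    using arg_cong[OF iffD1[OF eq_commute mult_div_mod_eq[of p "x2+y2"]], of int] unfolding s2_def o2_def of_nat_add of_nat_mult .
  have e2: "int x3 + int y3 = int p * int o3 + int s3"
    using arg_cong[OF iffD1[OF eq_commute mult_div_mod_eq[of p "x3+y3"]], of int] unfolding s3_def o3_def of_nat_add of_nat_mult .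
  have e3: "int x2 + int n * int x3 = int p * int uz + int x2p"
    using arg_cong[OF iffD1[OF eq_commute mult_div_mod_eq[of p "x2+n*x3"]], of int] unfolding uz_def x2p_def of_nat_add of_nat_mult .
  have e4: "int y2 + int n * int y3 = int p * int uw + int y2p"
    using arg_cong[OF iffD1[OF eq_commute mult_div_mod_eq[of p "y2+n*y3"]], of int] unfolding uw_def y2p_def of_nat_add of_nat_mult .
  have e5: "int s2 + int n * int s3 = int p * int U + int r"
    using arg_cong[OF iffD1[OF eq_commute mult_div_mod_eq[of p "s2+n*s3"]], of int] unfolding U_def r2 of_nat_add of_nat_mult .
  have e6: "int x2p + int y2p = int p * int ov + int r"
    using arg_cong[OF iffD1[OF eq_commute mult_div_mod_eq[of p "x2p+y2p"]], of int] unfolding ov_def r_def of_nat_add of_nat_mult .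
  have "int p * (int ov + int uz + int uw) = int p * (int o2 + int n * int o3 + int U)"
  proof -
    have ne2: "int n*int x3 + int n*int y3 = int p*(int n*int o3) + int n*int s3"
      using e2 by (metis distrib_left mult.left_commute)
    show ?thesis unfolding distrib_left using e1 e3 e4 e5 e6 ne2 by linarith
  qed
  hence key: "int ov = int o2 + int n * int o3 + int U - int uz - int uw"
    using p by simp
  have second: "((x2+y2) mod p + n*((x3+y3) mod p)) mod p = r"
    using r2 s2_def s3_def by simp
  have first: "(((x1 + y1 + s2 * x3 * y3 + a * o2 + b * o3) mod p) + a * U + m * s3^3) mod p
     = ((x1 + a*uz + m*x3^3) mod p + (y1 + a*uw + m*y3^3) mod p + r*x3*y3 + a*ov + c*o3) mod p"
  proof -
    have l: "(((x1 + y1 + s2 * x3 * y3 + a * o2 + b * o3) mod p) + a * U + m * s3^3) mod p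
        = (x1 + y1 + s2 * x3 * y3 + a * o2 + b * o3 + a * U + m * s3^3) mod p"
      by (rule modl1)
    have rr: "((x1 + a*uz + m*x3^3) mod p + (y1 + a*uw + m*y3^3) mod p + r*x3*y3 + a*ov + c*o3) mod p
        = ((x1 + a*uz + m*x3^3) + (y1 + a*uw + m*y3^3) + r*x3*y3 + a*ov + c*o3) mod p"
      using modl2[of "x1 + a*uz + m*x3^3" p "y1 + a*uw + m*y3^3" "r*x3*y3 + a*ov + c*o3"]
      by (simp add: add.assoc)
    have s3e: "int s3 = int x3 + int y3 - int p * int o3" using e2 by simp
    have re: "int r = int s2 + int n * int s3 - int p * int U" using e5 by simp
    have "int p dvd (int (x1 + y1 + s2 * x3 * y3 + a * o2 + b * o3 + a * U + m * s3^3)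
       - int ((x1 + a*uz + m*x3^3) + (y1 + a*uw + m*y3^3) + r*x3*y3 + a*ov + c*o3))"
      unfolding m of_nat_add of_nat_mult of_nat_power
      by (rule alg[OF s3e re key cj kt])
    from nat_mod_from_int[OF this] l rr show ?thesis by simp
  qed
  have qb: "Qmult p a b (x1,x2,x3) (y1,y2,y3) = ((x1 + y1 + s2 * x3 * y3 + a * o2 + b * o3) mod p, s2, s3)"
    using xs by (simp add: s2_def s3_def o2_def o3_def ovf_div)
  have qc: "Qmult p a c (fmap p a n m (x1,x2,x3)) (fmap p a n m (y1,y2,y3))
     = (((x1 + a*uz + m*x3^3) mod p + (y1 + a*uw + m*y3^3) mod p + r*x3*y3 + a*ov + c*o3) mod p, r, s3)"
    using xs x2pp by (simp add: fmap_def uz_def uw_def ov_def r_def x2p_def y2p_def s3_def o3_def ovf_div)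
  show ?thesis unfolding qb qc
    using first second by (simp add: fmap_def U_def s2_def s3_def)
qed

lemma fmap_inj:
  assumes p: "p > 0"
  shows "inj_on (fmap p a n m) (Zp3 p)"
proof (rule inj_onI)
  fix x y assume x: "x \<in> Zp3 p" and y: "y \<in> Zp3 p" and e: "fmap p a n m x = fmap p a n m y"
  obtain x1 x2 x3 where xx: "x = (x1,x2,x3)" by (cases x) auto
  obtain y1 y2 y3 where yy: "y = (y1,y2,y3)" by (cases y) auto
  have lt: "x1 < p" "x2 < p" "x3 < p" "y1 < p" "y2 < p" "y3 < p"
    using x y unfolding xx yy Zp3_def by auto
  have e3: "x3 = y3" and e2': "(x2+n*x3) mod p = (y2+n*y3) mod p"
    and e1': "(x1 + a*((x2+n*x3) div p) + m*x3^3) mod p = (y1 + a*((y2+n*y3) div p) + m*y3^3) mod p"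
    using e unfolding xx yy fmap_def by auto
  have "[x2 + n*x3 = y2 + n*x3] (mod p)" using e2' e3 by (simp add: cong_def)
  hence "[x2 = y2] (mod p)" by (simp add: cong_add_rcancel_nat)
  hence e2: "x2 = y2" using lt by (simp add: cong_def)
  have "[x1 + (a*((x2+n*x3) div p) + m*x3^3) = y1 + (a*((x2+n*x3) div p) + m*x3^3)] (mod p)"
    using e1' e2 e3 by (simp add: cong_def add.assoc)
  hence "[x1 = y1] (mod p)" by (simp add: cong_add_rcancel_nat)
  hence "x1 = y1" using lt by (simp add: cong_def)
  thus "x = y" using e2 e3 xx yy by simp
qed

lemma fmap_into:
  assumes p: "p > 0"
  shows "fmap p a n m ` Zp3 p \<subseteq> Zp3 p"
  using p by (auto simp: Zp3_def fmap_def)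

theorem corollary5p10:
  fixes p a b c :: nat
  assumes "prime p" and "p \<noteq> 3"
    and "a \<in> {1..<p}" and "b \<in> {0..<p}" and "c \<in> {0..<p}"
  shows "magma_iso (Zp3 p) (Qmult p a b) (Zp3 p) (Qmult p a c)"
proof -
  have p: "p > 0" using prime_gt_0_nat[OF assms(1)] .
  have p2: "p \<ge> 2" using prime_ge_2_nat[OF assms(1)] .
  have a: "0 < a" "a < p" "c < p" using assms(3,5) by auto
  have "\<not> p dvd a"
  proof
    assume "p dvd a"
    hence "p \<le> a" using a(1) by (rule dvd_imp_le)
    thus False using a(2) by simp
  qed
  hence "coprime p a" by (rule prime_imp_coprime[OF assms(1)])
  hence "coprime a p" using coprime_commute by blast
  hence ga: "gcd a p = 1" using coprime_iff_gcd_eq_1 by blast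
  have "\<not> p dvd 3"
  proof
    assume "p dvd 3"
    hence "p \<le> 3" by (rule dvd_imp_le) simp
    with p2 assms(2) have "p = 2" by linarith
    with \<open>p dvd 3\<close> show False by simp
  qed
  hence "coprime p 3" by (rule prime_imp_coprime[OF assms(1)])
  hence "coprime 3 p" using coprime_commute by blast
  hence g3: "gcd 3 p = 1" using coprime_iff_gcd_eq_1 by blast
  obtain xa where xa: "[a * xa = 1] (mod p)" using cong_solve_nat[of a p] ga by auto
  obtain k where k: "[3 * k = 1] (mod p)" using cong_solve_nat[of 3 p] g3 by auto
  define n where "n = xa * (b + p - c)"
  have "[a * n = b + p - c] (mod p)" unfolding n_def mult.assoc[symmetric]
    using cong_scalar_right[OF xa] by simp
  then obtain k1 k2 where "b + p - c + k1 * p = a * n + k2 * p"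
    unfolding cong_iff_lin_nat by blast
  hence "int (b + p - c + k1 * p) = int (a * n + k2 * p)" by simp
  hence "int b + int p - int c + int k1 * int p = int a * int n + int k2 * int p"
    using a by (simp add: of_nat_diff)
  hence cj: "int c = int b + int p * (1 + int k1 - int k2) - int a * int n"
    by (simp add: algebra_simps)
  from k obtain q1 q2 where "1 + q1 * p = 3 * k + q2 * p"
    unfolding cong_iff_lin_nat by blast
  hence "int (1 + q1 * p) = int (3 * k + q2 * p)" by simp
  hence "1 + int q1 * int p = 3 * int k + int q2 * int p" by simp
  hence kt: "3 * int k = 1 + int p * (int q1 - int q2)" by (simp add: algebra_simps)
  let ?f = "fmap p a n (n*k)"
  have fin: "finite (Zp3 p)" by (simp add: Zp3_def)
  have bij: "bij_betw ?f (Zp3 p) (Zp3 p)"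
    unfolding bij_betw_def using fmap_inj[OF p] endo_inj_surj[OF fin fmap_into[OF p] fmap_inj[OF p]]
    by simp
  have "\<forall>x\<in>Zp3 p. \<forall>y\<in>Zp3 p. ?f (Qmult p a b x y) = Qmult p a c (?f x) (?f y)"
  proof (intro ballI)
    fix x y assume x: "x \<in> Zp3 p" and y: "y \<in> Zp3 p"
    obtain x1 x2 x3 where xx: "x = (x1,x2,x3)" by (cases x) auto
    obtain y1 y2 y3 where yy: "y = (y1,y2,y3)" by (cases y) auto
    have lt: "x2 < p" "x3 < p" "y2 < p" "y3 < p"
      using x y unfolding xx yy Zp3_def by auto
    show "?f (Qmult p a b x y) = Qmult p a c (?f x) (?f y)"
      unfolding xx yy by (rule hom[OF p lt cj kt refl])
  qed
  thus ?thesis unfolding magma_iso_def using bij by blast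
qed

end
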